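(* Let $X$ be a metric space with $\operatorname{cdim}X\le n$. Then there are constants $c_0>0$, $\delta>0$ and $r_0>0$ such that for every $r\in(0,r_0)$ there exists a sequence of open coverings $\mathcal U_j$, $j\in\mathbb N$, of $X$ with: (i) there is one color set $A$ with $|A|=n+1$ such that for each $j$, $\mathcal U_j=\bigcup_{a\in A}\mathcal U_j^a$ where each $\mathcal U_j^a$ consists of pairwise disjoint sets; (ii) for every $j$, $\delta r^j\le\operatorname{mesh}(\mathcal U_j)\le r^j$ and $L(\mathcal U_j)\ge c_0\operatorname{mesh}(\mathcal U_j)$; (iii) for every $i>j$, $\mathcal U_i$ is inscribed in $\mathcal U_j$; (iv) for every $a\in A$ the union $\mathcal U^a=\bigcup_{j\in\mathbb N}\mathcal U_j^a$ is separated.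
   Context: A covering $\mathcal U'$ is inscribed in $\mathcal U$ if every member of $\mathcal U'$ is contained in some member of $\mathcal U$. A family is separated if any two different members are either disjoint or one contains the other. Capacity dimension: for an open covering $\mathcal U$ of a metric space $Z$ let $\operatorname{mesh}(\mathcal U,z)=\sup\{\operatorname{diam}U:z\in U\in\mathcal U\}$, $\operatorname{mesh}(\mathcal U)=\sup_U\operatorname{diam}U$, $L(\mathcal U,z)=\min\{\sup_{U\in\mathcal U}\operatorname{dist}(z,Z\setminus U),\operatorname{mesh}(\mathcal U,z)\}$, $L(\mathcal U)=\inf_zL(\mathcal U,z)$, $\operatorname{cap}(\mathcal U)=L(\mathcal U)/\operatorname{mesh}(\mathcal U)$ (set to $1$ if $\operatorname{mesh}=0$ or $L=\operatorname{mesh}=\infty$). A covering is $(m+1)$-colored if it is a union of $m+1$ subfamilies each of pairwise disjoint sets. For $\tau>0$, $\delta\in(0,1)$, integer $m\ge0$, $c_\tau(Z,m,\delta)$ is the supremum (0 if empty) of $\operatorname{cap}(\mathcal U)$ over open $(m+1)$-colored coverings with $\delta\tau\le\operatorname{mesh}(\mathcal U)\le\tau$; $c(Z,m,\delta)=\liminf_{\tau\to0}c_\tau(Z,m,\delta)$; $c(Z,m)=\lim_{\delta\to0}c(Z,m,\delta)$; $\operatorname{cdim}Z=\inf\{m:c(Z,m)>0\}$. *)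

theory Defs
  imports "HOL-Analysis.Analysis"
begin

text \<open>Capacity dimension of a metric space (the whole type 'a).  Diameters and
  related quantities take values in the extended reals, so that unbounded sets
  have diameter \<infinity>.\<close>

definition ediam :: "'a::metric_space set \<Rightarrow> ereal" where
  "ediam S = (if S = {} then 0 else (SUP p\<in>S \<times> S. ereal (dist (fst p) (snd p))))"

definition mesh :: "'a::metric_space set set \<Rightarrow> ereal" where
  "mesh \<U> = Sup (insert 0 (ediam ` \<U>))"

definition mesh_at :: "'a::metric_space set set \<Rightarrow> 'a \<Rightarrow> ereal" where
  "mesh_at \<U> z = Sup (insert 0 (ediam ` {U\<in>\<U>. z \<in> U}))"

definition dist_compl :: "'a::metric_space \<Rightarrow> 'a set \<Rightarrow> ereal" where
  "dist_compl z U = (if U = UNIV then \<infinity> else ereal (infdist z (- U)))"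

definition Leb_at :: "'a::metric_space set set \<Rightarrow> 'a \<Rightarrow> ereal" where
  "Leb_at \<U> z = min (Sup (insert 0 ((\<lambda>U. dist_compl z U) ` \<U>))) (mesh_at \<U> z)"

definition Leb :: "'a::metric_space set set \<Rightarrow> ereal" where
  "Leb \<U> = (INF z. Leb_at \<U> z)"

definition cap :: "'a::metric_space set set \<Rightarrow> ereal" where
  "cap \<U> = (if mesh \<U> = 0 \<or> (Leb \<U> = \<infinity> \<and> mesh \<U> = \<infinity>) then 1 else Leb \<U> / mesh \<U>)"

definition open_covering :: "'a::topological_space set set \<Rightarrow> bool" where
  "open_covering \<U> \<longleftrightarrow> (\<forall>U\<in>\<U>. open U) \<and> \<Union>\<U> = UNIV"

definition colored :: "nat \<Rightarrow> 'a set set \<Rightarrow> bool" where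
  "colored k \<U> \<longleftrightarrow> (\<exists>F :: nat \<Rightarrow> 'a set set. \<U> = (\<Union>i<k. F i) \<and> (\<forall>i<k. disjoint (F i)))"

definition c_tau :: "'a::metric_space itself \<Rightarrow> real \<Rightarrow> nat \<Rightarrow> real \<Rightarrow> ereal" where
  "c_tau _ \<tau> m \<delta> =
     (let S = {cap \<U> | \<U> :: 'a set set. open_covering \<U> \<and> colored (m + 1) \<U>
                 \<and> ereal (\<delta> * \<tau>) \<le> mesh \<U> \<and> mesh \<U> \<le> ereal \<tau>}
      in if S = {} then 0 else Sup S)"

definition c_delta :: "'a::metric_space itself \<Rightarrow> nat \<Rightarrow> real \<Rightarrow> ereal" where
  "c_delta X m \<delta> = Liminf (at_right 0) (\<lambda>\<tau>. c_tau X \<tau> m \<delta>)"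

definition c_m :: "'a::metric_space itself \<Rightarrow> nat \<Rightarrow> ereal" where
  "c_m X m = Lim (at_right 0) (\<lambda>\<delta>. c_delta X m \<delta>)"

definition cdim :: "'a::metric_space itself \<Rightarrow> enat" where
  "cdim X = Inf (enat ` {m. c_m X m > 0})"

definition inscribed :: "'a set set \<Rightarrow> 'a set set \<Rightarrow> bool" where
  "inscribed \<V> \<U> \<longleftrightarrow> (\<forall>V\<in>\<V>. \<exists>U\<in>\<U>. V \<subseteq> U)"

definition separated :: "'a set set \<Rightarrow> bool" where
  "separated \<U> \<longleftrightarrow> (\<forall>U\<in>\<U>. \<forall>V\<in>\<U>. U \<noteq> V \<longrightarrow> U \<inter> V = {} \<or> U \<subseteq> V \<or> V \<subseteq> U)"

end

theory Submission
  imports Defs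
begin


definition Eb :: "(nat \<times> 'a set) set \<Rightarrow> nat \<Rightarrow> nat \<Rightarrow> nat \<times> 'a set \<Rightarrow> nat \<times> 'a set \<Rightarrow> bool" where
  "Eb N k K p q \<longleftrightarrow> p \<in> N \<and> q \<in> N \<and> k \<le> fst p \<and> fst p < K \<and> k \<le> fst q \<and> fst q < K \<and> snd p \<inter> snd q \<noteq> {}"

definition Ej :: "(nat \<times> 'a set) set \<Rightarrow> nat \<Rightarrow> nat \<times> 'a set \<Rightarrow> nat \<times> 'a set \<Rightarrow> bool" where
  "Ej N j p q \<longleftrightarrow> p \<in> N \<and> q \<in> N \<and> j < fst q \<and> snd p \<inter> snd q \<noteq> {}"

definition hat :: "(nat \<times> 'a set) set \<Rightarrow> nat \<times> 'a set \<Rightarrow> 'a set" where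
  "hat N p = \<Union>{snd q | q. (Ej N (fst p))\<^sup>*\<^sup>* p q}"

lemma Eb_closed: "(Eb N k K)\<^sup>*\<^sup>* p q \<Longrightarrow> p \<in> N \<Longrightarrow> k \<le> fst p \<Longrightarrow> fst p < K \<Longrightarrow> q \<in> N \<and> k \<le> fst q \<and> fst q < K"
  by (induction rule: rtranclp_induct) (auto simp: Eb_def)

lemma Ej_lev: "(Ej N i)\<^sup>*\<^sup>* p q \<Longrightarrow> i \<le> fst p \<Longrightarrow> p \<in> N \<Longrightarrow> i \<le> fst q \<and> q \<in> N"
  by (induction rule: rtranclp_induct) (auto simp: Ej_def)

locale clus =
  fixes N :: "(nat \<times> 'a::metric_space set) set" and r :: real
  assumes r_pos: "0 < r" and r_le: "r \<le> 1/4"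
  and H1: "\<And>k W x y. (k,W) \<in> N \<Longrightarrow> x \<in> W \<Longrightarrow> y \<in> W \<Longrightarrow> dist x y \<le> r^k/2"
  and H2: "\<And>k W W' x y. (k,W) \<in> N \<Longrightarrow> (k,W') \<in> N \<Longrightarrow> W \<noteq> W' \<Longrightarrow> x \<in> W \<Longrightarrow> y \<in> W' \<Longrightarrow> 2 * r^(Suc k) < dist x y"
begin

lemma band: "(Eb N k (k+M))\<^sup>*\<^sup>* p q \<Longrightarrow> p \<in> N \<Longrightarrow> k \<le> fst p \<Longrightarrow> fst p < k+M \<Longrightarrow> x \<in> snd p \<Longrightarrow> y \<in> snd q
   \<Longrightarrow> dist x y \<le> r^k"
proof (induction M arbitrary: k p q x y)
  case 0 then show ?case by simp
next
  case (Suc M)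
  define A where "A p q \<longleftrightarrow> (Eb N (Suc k) (k + Suc M))\<^sup>*\<^sup>* p q \<and> p \<in> N \<and> Suc k \<le> fst p \<and> fst p < k + Suc M" for p q
  have IH: "dist x y \<le> r^(Suc k)" if "A p q" "x \<in> snd p" "y \<in> snd q" for p q x y
    using Suc.IH[of "Suc k" p q x y] that unfolding A_def by simp
  have Acl: "q \<in> N \<and> Suc k \<le> fst q \<and> fst q < k + Suc M" if "A p q" for p q
    using that Eb_closed unfolding A_def by metis
  have rpos: "0 < r^(Suc k)" using r_pos by simp
  define near where "near P Z \<longleftrightarrow> P = Z \<or> (\<exists>Q. A P Q \<and> snd Q \<inter> snd Z \<noteq> {})" for P Z
  have near_dist: "\<exists>z\<in>snd Z. dist x z \<le> r^(Suc k)" if nPZ: "near P Z" "x \<in> snd P" for P Z x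
  proof (cases "P = Z")
    case True then show ?thesis using nPZ rpos by (intro bexI[of _ x]) auto
  next
    case False
    then obtain Q z where "A P Q" "z \<in> snd Q" "z \<in> snd Z" using nPZ unfolding near_def by blast
    then show ?thesis using IH[of P Q x z] nPZ by blast
  qed
  have eqZ: "s = Z" if "Z \<in> N" "fst Z = k" "s \<in> N" "fst s = k" "w \<in> snd s" "z \<in> snd Z"
      "dist w z \<le> r^(Suc k)" for Z s w z
  proof (rule ccontr)
    assume "s \<noteq> Z"
    then have "snd s \<noteq> snd Z" using that by (simp add: prod_eq_iff)
    then have "2 * r^(Suc k) < dist w z"
      using H2[of k "snd s" "snd Z" w z] that by (metis prod.collapse)
    then show False using that rpos by linarith
  qed
  have inv: "A p q \<or> (\<exists>Z\<in>N. fst Z = k \<and> near p Z \<and> near q Z)"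
    using Suc.prems(1)
  proof (induction rule: rtranclp_induct)
    case base
    show ?case
    proof (cases "fst p = k")
      case True then show ?thesis using Suc.prems unfolding near_def by blast
    next
      case False then show ?thesis using Suc.prems unfolding A_def by auto
    qed
  next
    case (step q s)
    from step.hyps(2) have s: "s \<in> N" "k \<le> fst s" "fst s < k + Suc M" "q \<in> N" "k \<le> fst q" "fst q < k + Suc M"
      and qs: "snd q \<inter> snd s \<noteq> {}" unfolding Eb_def by auto
    from step.IH show ?case
    proof
      assume Apq: "A p q"
      show ?thesis
      proof (cases "fst s = k")
        case True
        have "near p s" unfolding near_def using Apq qs by blast
        moreover have "near s s" unfolding near_def by simp
        ultimately show ?thesis using s True by blast
      next
        case False
        have "Eb N (Suc k) (k + Suc M) q s" using Acl[OF Apq] s False qs unfolding Eb_def by auto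
        then have "A p s" using Apq unfolding A_def by auto
        then show ?thesis by blast
      qed
    next
      assume "\<exists>Z\<in>N. fst Z = k \<and> near p Z \<and> near q Z"
      then obtain Z where Z: "Z \<in> N" "fst Z = k" "near p Z" "near q Z" by blast
      show ?thesis
      proof (cases "fst s = k")
        case True
        have "s = Z"
        proof (cases "q = Z")
          case True
          then obtain w where "w \<in> snd s" "w \<in> snd Z" using qs by blast
          then show ?thesis using eqZ[of Z s w w] Z s \<open>fst s = k\<close> rpos by simp
        next
          case False
          then obtain Q z where AQ: "A q Q" "z \<in> snd Q" "z \<in> snd Z" using Z unfolding near_def by blast
          obtain w where w: "w \<in> snd q" "w \<in> snd s" using qs by blast
          have "dist w z \<le> r^(Suc k)" using IH[OF AQ(1) w(1) AQ(2)] .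
          then show ?thesis using eqZ[of Z s w z] Z s \<open>fst s = k\<close> AQ w by simp
        qed
        then show ?thesis using Z unfolding near_def by blast
      next
        case False
        have "near s Z"
        proof (cases "q = Z")
          case True
          have "A s s" unfolding A_def using s False by auto
          then show ?thesis unfolding near_def using qs True by blast
        next
          case qZ: False
          then obtain Q where AQ: "A q Q" "snd Q \<inter> snd Z \<noteq> {}" using Z unfolding near_def by blast
          then have "q \<in> N" "Suc k \<le> fst q" "fst q < k + Suc M" unfolding A_def by auto
          then have "Eb N (Suc k) (k + Suc M) s q" using s False qs unfolding Eb_def by auto
          then have "A s Q" using AQ s False unfolding A_def
            by (auto intro: converse_rtranclp_into_rtranclp)
          then show ?thesis unfolding near_def using AQ by blast
        qed
        then show ?thesis using Z by blast
      qed
    qed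
  qed
  from inv show ?case
  proof
    assume "A p q"
    then have "dist x y \<le> r^(Suc k)" using IH Suc.prems by blast
    moreover have "r^(Suc k) \<le> r^k" using r_pos r_le by (simp add: power_le_one mult_le_one)
    ultimately show ?thesis by linarith
  next
    assume "\<exists>Z\<in>N. fst Z = k \<and> near p Z \<and> near q Z"
    then obtain Z where Z: "Z \<in> N" "fst Z = k" "near p Z" "near q Z" by blast
    obtain z1 where z1: "z1 \<in> snd Z" "dist x z1 \<le> r^(Suc k)" using near_dist[OF Z(3)] Suc.prems by blast
    obtain z2 where z2: "z2 \<in> snd Z" "dist y z2 \<le> r^(Suc k)" using near_dist[OF Z(4)] Suc.prems by blast
    have "dist z1 z2 \<le> r^k/2" using H1[of k "snd Z" z1 z2] Z z1 z2 by (metis prod.collapse)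
    moreover have "dist x y \<le> dist x z1 + dist z1 z2 + dist y z2"
      using dist_triangle[of x y z1] dist_triangle[of z1 y z2] dist_commute[of y z2] by linarith
    moreover have "r^(Suc k) \<le> r^k/4" using r_pos r_le by (simp add: mult_right_mono)
    ultimately show ?thesis using z1 z2 by linarith
  qed
qed

lemma Ej_to_Eb: "(Ej N j)\<^sup>*\<^sup>* p q \<Longrightarrow> p \<in> N \<Longrightarrow> j < fst p \<Longrightarrow>
   \<exists>K. fst p < K \<and> (Eb N (Suc j) K)\<^sup>*\<^sup>* p q \<and> q \<in> N \<and> j < fst q"
proof (induction rule: rtranclp_induct)
  case base then show ?case by (intro exI[of _ "Suc (fst p)"]) auto
next
  case (step q s)
  then obtain K where K: "fst p < K" "(Eb N (Suc j) K)\<^sup>*\<^sup>* p q" "q \<in> N" "j < fst q" by blast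
  define K' where "K' = max K (Suc (max (fst q) (fst s)))"
  have "Eb N (Suc j) K \<le> Eb N (Suc j) K'" unfolding K'_def Eb_def by auto
  then have "(Eb N (Suc j) K')\<^sup>*\<^sup>* p q" using K(2) rtranclp_mono by blast
  moreover have "Eb N (Suc j) K' q s" using step(2) K unfolding Eb_def Ej_def K'_def by auto
  ultimately show ?case using K step(2) unfolding K'_def Ej_def
    by (intro exI[of _ K']) (auto simp: K'_def)
qed

lemma far: "(Ej N j)\<^sup>*\<^sup>* p q \<Longrightarrow> p \<in> N \<Longrightarrow> j < fst p \<Longrightarrow> x \<in> snd p \<Longrightarrow> y \<in> snd q \<Longrightarrow> dist x y \<le> r^(Suc j)"
proof -
  assume a: "(Ej N j)\<^sup>*\<^sup>* p q" "p \<in> N" "j < fst p" "x \<in> snd p" "y \<in> snd q"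
  then obtain K where K: "fst p < K" "(Eb N (Suc j) K)\<^sup>*\<^sup>* p q" using Ej_to_Eb by blast
  have "K = Suc j + (K - Suc j)" using K a by simp
  then show ?thesis using band[of "Suc j" "K - Suc j" p q x y] K a by simp
qed

lemma hat_near: "(j,U) \<in> N \<Longrightarrow> y \<in> hat N (j,U) \<Longrightarrow> \<exists>u\<in>U. dist u y \<le> r^(Suc j)"
proof -
  assume a: "(j,U) \<in> N" "y \<in> hat N (j,U)"
  then obtain q where q: "(Ej N j)\<^sup>*\<^sup>* (j,U) q" "y \<in> snd q" unfolding hat_def by auto
  from q(1) show ?thesis
  proof (cases rule: converse_rtranclpE)
    case base then show ?thesis using q r_pos by (intro bexI[of _ y]) auto
  next
    case (step p1)
    then obtain u where "u \<in> U" "u \<in> snd p1" "p1 \<in> N" "j < fst p1" unfolding Ej_def by auto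
    then show ?thesis using far[of j p1 q u y] step q by blast
  qed
qed

lemma hat_sub: "U \<subseteq> hat N (j,U)"
  unfolding hat_def by auto

lemma hat_N: "q \<in> N" if "(Ej N j)\<^sup>*\<^sup>* p q" "p \<in> N"
  using that by (induction rule: rtranclp_induct) (auto simp: Ej_def)

lemma hat_open: "(\<And>k W. (k,W) \<in> N \<Longrightarrow> open W) \<Longrightarrow> p \<in> N \<Longrightarrow> open (hat N p)"
  unfolding hat_def using hat_N by (auto intro!: open_Union) (metis prod.collapse)

lemma hat_empty: "hat N (j,{}) = {}"
proof -
  have "snd q = {}" if "(Ej N j)\<^sup>*\<^sup>* (j,{}) q" for q
    using that by (cases rule: converse_rtranclpE) (auto simp: Ej_def)
  then show ?thesis unfolding hat_def Union_empty_conv by (auto; metis empty_iff)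
qed

lemma hat_ball: "(i,W) \<in> N \<Longrightarrow> w \<in> W \<Longrightarrow> y \<in> hat N (i,W) \<Longrightarrow> dist w y \<le> r^i/2 + r^(Suc i)"
proof -
  assume a: "(i,W) \<in> N" "w \<in> W" "y \<in> hat N (i,W)"
  then obtain u where "u \<in> W" "dist u y \<le> r^(Suc i)" using hat_near by blast
  moreover have "dist w u \<le> r^i/2" using H1 a \<open>u \<in> W\<close> by blast
  ultimately show ?thesis using dist_triangle[of w y u] by linarith
qed

lemma hat_diam: "(j,U) \<in> N \<Longrightarrow> x \<in> hat N (j,U) \<Longrightarrow> y \<in> hat N (j,U) \<Longrightarrow> dist x y \<le> r^j"
proof -
  assume a: "(j,U) \<in> N" "x \<in> hat N (j,U)" "y \<in> hat N (j,U)"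
  obtain u where u: "u \<in> U" "dist u x \<le> r^(Suc j)" using hat_near a by blast
  obtain v where v: "v \<in> U" "dist v y \<le> r^(Suc j)" using hat_near a by blast
  have "dist u v \<le> r^j/2" using H1 a u v by blast
  moreover have "dist x y \<le> dist u x + dist u v + dist v y"
    using dist_triangle[of x y u] dist_triangle[of u y v] dist_commute[of x u] by linarith
  moreover have "r^(Suc j) \<le> r^j/4" using r_pos r_le by (simp add: mult_right_mono)
  ultimately show ?thesis using u v by linarith
qed

lemma hat_disj: "(j,U) \<in> N \<Longrightarrow> (j,W) \<in> N \<Longrightarrow> U \<noteq> W \<Longrightarrow> hat N (j,U) \<inter> hat N (j,W) = {}"
proof (rule ccontr)
  assume a: "(j,U) \<in> N" "(j,W) \<in> N" "U \<noteq> W" "hat N (j,U) \<inter> hat N (j,W) \<noteq> {}"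
  then obtain y where "y \<in> hat N (j,U)" "y \<in> hat N (j,W)" by blast
  then obtain u w where "u \<in> U" "dist u y \<le> r^(Suc j)" "w \<in> W" "dist w y \<le> r^(Suc j)"
    using hat_near a by meson
  moreover have "dist u w \<le> dist u y + dist w y" using dist_triangle[of u w y] dist_commute[of y w] by linarith
  moreover have "2 * r^(Suc j) < dist u w" using H2[OF a(1,2,3)] \<open>u \<in> U\<close> \<open>w \<in> W\<close> by blast
  ultimately show False by linarith
qed

lemma Ej_rev: "(Ej N i)\<^sup>*\<^sup>* p q \<Longrightarrow> p \<in> N \<Longrightarrow> j < i \<Longrightarrow> i \<le> fst p \<Longrightarrow> (Ej N j)\<^sup>*\<^sup>* q p"
proof (induction rule: rtranclp_induct)
  case base then show ?case by simp
next
  case (step q s)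
  have "i \<le> fst q" "q \<in> N" using Ej_lev[OF step(1)] step by auto
  then have "Ej N j s q" using step(2) \<open>j < i\<close> unfolding Ej_def by auto
  then show ?case using step by (auto intro: converse_rtranclp_into_rtranclp)
qed

lemma hat_nest: "(j,U) \<in> N \<Longrightarrow> (i,W) \<in> N \<Longrightarrow> j < i \<Longrightarrow> hat N (j,U) \<inter> hat N (i,W) \<noteq> {}
   \<Longrightarrow> hat N (i,W) \<subseteq> hat N (j,U)"
proof -
  assume a: "(j,U) \<in> N" "(i,W) \<in> N" "j < i" "hat N (j,U) \<inter> hat N (i,W) \<noteq> {}"
  then obtain y q1 q2 where q: "(Ej N j)\<^sup>*\<^sup>* (j,U) q1" "y \<in> snd q1" "(Ej N i)\<^sup>*\<^sup>* (i,W) q2" "y \<in> snd q2"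
    unfolding hat_def by auto
  have "q1 \<in> N" using hat_N q a by blast
  have q2: "q2 \<in> N" "i \<le> fst q2" using Ej_lev[OF q(3)] a by auto
  have "Ej N j q1 q2" using q q2 \<open>q1 \<in> N\<close> a unfolding Ej_def by auto
  moreover have "(Ej N j)\<^sup>*\<^sup>* q2 (i,W)" using Ej_rev[OF q(3)] a by simp
  ultimately have path: "(Ej N j)\<^sup>*\<^sup>* (j,U) (i,W)" using q(1)
    by (meson rtranclp.rtrancl_into_rtrancl rtranclp_trans)
  have mono: "Ej N i \<le> Ej N j" using a unfolding Ej_def by auto
  show ?thesis
  proof
    fix z assume "z \<in> hat N (i,W)"
    then obtain q where "(Ej N i)\<^sup>*\<^sup>* (i,W) q" "z \<in> snd q" unfolding hat_def by auto
    then have "(Ej N j)\<^sup>*\<^sup>* (i,W) q" using rtranclp_mono[OF mono] by blast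
    then have "(Ej N j)\<^sup>*\<^sup>* (j,U) q" using path by simp
    then show "z \<in> hat N (j,U)" unfolding hat_def using \<open>z \<in> snd q\<close> by (intro UnionI[of "snd q"]) (auto; metis prod.collapse)
  qed
qed

end


lemma ediam_ge: "x \<in> S \<Longrightarrow> y \<in> S \<Longrightarrow> ereal (dist x y) \<le> ediam S"
  unfolding ediam_def by (auto intro!: SUP_upper2[of "(x,y)"])

lemma ediam_le: "(\<And>x y. x \<in> S \<Longrightarrow> y \<in> S \<Longrightarrow> dist x y \<le> d) \<Longrightarrow> 0 \<le> d \<Longrightarrow> ediam S \<le> ereal d"
  unfolding ediam_def by (auto intro!: SUP_least)

lemma ediam_gtD: "ereal a < ediam S \<Longrightarrow> 0 \<le> a \<Longrightarrow> \<exists>x\<in>S. \<exists>y\<in>S. a < dist x y"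
  unfolding ediam_def by (auto split: if_splits simp: less_SUP_iff)

lemma mesh_ge: "U \<in> V \<Longrightarrow> ediam U \<le> mesh V"
  unfolding mesh_def by (intro Sup_upper) auto

lemma mesh_nonneg: "0 \<le> mesh V"
  unfolding mesh_def by (auto intro: Sup_upper)

lemma mesh_le: "(\<And>U. U \<in> V \<Longrightarrow> ediam U \<le> ereal d) \<Longrightarrow> 0 \<le> d \<Longrightarrow> mesh V \<le> ereal d"
  unfolding mesh_def by (auto intro!: Sup_least)

lemma mesh_at_ge: "U \<in> V \<Longrightarrow> z \<in> U \<Longrightarrow> ediam U \<le> mesh_at V z"
  unfolding mesh_at_def by (intro Sup_upper) auto

lemma Leb_at_nonneg: "0 \<le> Leb_at V z"
  unfolding Leb_at_def mesh_at_def by (auto intro: Sup_upper)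

lemma Leb_nonneg: "0 \<le> Leb V"
  unfolding Leb_def using Leb_at_nonneg by (auto intro: INF_greatest)

lemma cap_nonneg: "0 \<le> cap V"
  unfolding cap_def using Leb_nonneg mesh_nonneg by (auto intro: zero_le_divide_ereal)

lemma c_tau_nonneg: "0 \<le> c_tau X t m d"
  unfolding c_tau_def Let_def using cap_nonneg
  by (auto intro: Sup_upper2)

lemma c_delta_nonneg: "0 \<le> c_delta X m d"
  unfolding c_delta_def by (intro Liminf_bounded always_eventually) (simp add: c_tau_nonneg)

lemma infdist_geI: "(\<And>a. a \<in> A \<Longrightarrow> d \<le> dist x a) \<Longrightarrow> A \<noteq> {} \<Longrightarrow> d \<le> infdist x A"
  unfolding infdist_def by (auto intro: cINF_greatest)

definition GP :: "nat \<Rightarrow> real \<Rightarrow> real \<Rightarrow> (nat \<Rightarrow> 'a::metric_space set set) \<Rightarrow> bool" where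
  "GP n lam \<tau> F \<longleftrightarrow> (\<forall>i U. U \<in> F i \<longrightarrow> open U) \<and> (\<forall>i. disjoint (F i)) \<and>
     (\<forall>i U. U \<in> F i \<longrightarrow> (\<forall>x\<in>U. \<forall>y\<in>U. dist x y \<le> \<tau>)) \<and>
     (\<forall>z. \<exists>i\<le>n. \<exists>U\<in>F i. ball z (lam*\<tau>) \<subseteq> U) \<and>
     (\<forall>z::'a. \<exists>w. lam*\<tau>/2 \<le> dist z w \<and> dist z w \<le> \<tau>)"

lemma good:
  assumes "cdim TYPE('a::metric_space) \<le> enat n"
  shows "\<exists>lam>0. lam \<le> 1 \<and> (\<exists>\<tau>0>0. \<forall>\<tau>. 0<\<tau> \<and> \<tau><\<tau>0 \<longrightarrow> (\<exists>F::nat \<Rightarrow> 'a set set. GP n lam \<tau> F))"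
proof -
  let ?X = "TYPE('a)"
  define M where "M = {m. c_m ?X m > 0}"
  have "M \<noteq> {}"
  proof
    assume "M = {}"
    then have "cdim ?X = \<infinity>" unfolding cdim_def M_def[symmetric] by (simp add: Inf_enat_def)
    then show False using assms by simp
  qed
  then obtain m0 where "m0 \<in> M" by blast
  then have "Inf (enat ` M) \<in> enat ` M" by (intro wellorder_InfI) auto
  then obtain m where m: "m \<in> M" "cdim ?X = enat m" unfolding cdim_def M_def by auto
  then have "m \<le> n" using assms by simp
  have "\<exists>d>0. 0 < c_delta ?X m d"
  proof (rule ccontr)
    assume "\<not> ?thesis"
    then have z: "c_delta ?X m d = 0" if "d > 0" for d
      using c_delta_nonneg[of ?X m d] that by (meson antisym not_less)
    have "Lim (at_right (0::real)) (\<lambda>d. c_delta ?X m d) = Lim (at_right (0::real)) (\<lambda>d. 0)"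
      by (rule Lim_cong) (auto simp: eventually_at_right_field z intro!: exI[of _ 1])
    also have "\<dots> = 0" by (rule tendsto_Lim) (auto simp: trivial_limit_at_right_real)
    finally show False using m unfolding M_def c_m_def by simp
  qed
  then obtain d where d: "d > 0" "0 < c_delta ?X m d" by blast
  obtain c where c: "0 < ereal c" "ereal c < c_delta ?X m d" using ereal_dense2[OF d(2)] by blast
  have "c > 0" using c by simp
  have "\<forall>\<^sub>F t in at_right 0. ereal c < c_tau ?X t m d"
    using less_LiminfD c(2) unfolding c_delta_def by blast
  then obtain \<tau>0 where \<tau>0: "\<tau>0 > 0" "\<And>t. 0 < t \<Longrightarrow> t < \<tau>0 \<Longrightarrow> ereal c < c_tau ?X t m d"
    unfolding eventually_at_right_field by auto
  define lam where "lam = min (c*d) 1"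
  have lam: "lam > 0" "lam \<le> 1" "lam \<le> c * d" unfolding lam_def using \<open>c > 0\<close> d by auto
  have main: "\<forall>\<tau>. 0<\<tau> \<and> \<tau><\<tau>0 \<longrightarrow> (\<exists>F::nat \<Rightarrow> 'a set set.
     (\<forall>i U. U \<in> F i \<longrightarrow> open U) \<and> (\<forall>i. disjoint (F i)) \<and>
     (\<forall>i U. U \<in> F i \<longrightarrow> (\<forall>x\<in>U. \<forall>y\<in>U. dist x y \<le> \<tau>)) \<and>
     (\<forall>z. \<exists>i\<le>n. \<exists>U\<in>F i. ball z (lam*\<tau>) \<subseteq> U) \<and>
     (\<forall>z::'a. \<exists>w. lam*\<tau>/2 \<le> dist z w \<and> dist z w \<le> \<tau>))"
  proof (intro allI impI)
    fix \<tau> :: real assume t: "0 < \<tau> \<and> \<tau> < \<tau>0"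
    define S where "S = {cap \<U> | \<U> :: 'a set set. open_covering \<U> \<and> colored (m + 1) \<U>
                 \<and> ereal (d * \<tau>) \<le> mesh \<U> \<and> mesh \<U> \<le> ereal \<tau>}"
    have "ereal c < c_tau ?X \<tau> m d" using \<tau>0 t by auto
    then have "S \<noteq> {}" "ereal c < Sup S" using c unfolding c_tau_def S_def[symmetric] Let_def
      by (auto split: if_splits)
    then obtain V :: "'a set set" where V: "open_covering V" "colored (m+1) V"
      "ereal (d * \<tau>) \<le> mesh V" "mesh V \<le> ereal \<tau>" "ereal c < cap V"
      unfolding S_def less_Sup_iff by auto
    have dt: "0 < d * \<tau>" using d t by simp
    obtain M where M: "mesh V = ereal M" "d * \<tau> \<le> M" "M \<le> \<tau>"
      using V(3,4) by (cases "mesh V") auto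
    have "cap V = Leb V / ereal M" unfolding cap_def using M dt by auto
    then have "ereal M * ereal c < Leb V" using V(5) M dt ereal_less_divide_pos[of "ereal M" "ereal c" "Leb V"] by simp
    moreover have "lam * \<tau> \<le> M * c" using lam M \<open>c > 0\<close> t
      by (smt (verit, ccfv_SIG) mult.commute mult_left_mono mult.assoc)
    ultimately have LL: "ereal (lam * \<tau>) < Leb V"
      by (metis ereal_less_eq(3) order.strict_trans1 times_ereal.simps(1))
    have Lz: "ereal (lam * \<tau>) < Leb_at V z" for z
      using LL unfolding Leb_def by (meson INF_lower UNIV_I order_less_le_trans)
    have lt: "0 < lam * \<tau>" using lam t by simp
    obtain F where F: "V = (\<Union>i<m+1. F i)" "\<forall>i<m+1. disjoint (F i)" using V(2) unfolding colored_def by blast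
    define G where "G i = (if i \<le> m then F i else {})" for i
    have VG: "U \<in> V \<longleftrightarrow> (\<exists>i\<le>m. U \<in> G i)" for U unfolding F G_def by auto
    have diam: "dist x y \<le> \<tau>" if "U \<in> V" "x \<in> U" "y \<in> U" for U x y
    proof -
      have "ereal (dist x y) \<le> ediam U" using ediam_ge that by blast
      also have "\<dots> \<le> mesh V" using mesh_ge that by blast
      finally have "ereal (dist x y) \<le> ereal \<tau>" using V(4) by (rule order_trans)
      then show ?thesis by simp
    qed
    have P1: "\<forall>i U. U \<in> G i \<longrightarrow> open U" using V(1) unfolding open_covering_def F G_def by auto
    have P2: "\<forall>i. disjoint (G i)" using F(2) unfolding G_def by auto
    have P3: "\<forall>i U. U \<in> G i \<longrightarrow> (\<forall>x\<in>U. \<forall>y\<in>U. dist x y \<le> \<tau>)" using diam unfolding F G_def by (auto; meson lessThan_iff less_Suc_eq_le)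
    have P4: "\<exists>i\<le>n. \<exists>U\<in>G i. ball z (lam*\<tau>) \<subseteq> U" for z :: 'a
    proof -
      have "ereal (lam * \<tau>) < Sup (insert 0 ((\<lambda>U. dist_compl z U) ` V))"
        using Lz[of z] unfolding Leb_at_def by simp
      then obtain U where U: "U \<in> V" "ereal (lam * \<tau>) < dist_compl z U"
        using lt unfolding less_Sup_iff by auto
      have "ball z (lam * \<tau>) \<subseteq> U"
      proof (cases "U = UNIV")
        case False
        then have "lam * \<tau> < infdist z (- U)" using U unfolding dist_compl_def by simp
        then show ?thesis using infdist_le[of _ "- U" z] by (fastforce simp: dist_commute)
      qed simp
      then show ?thesis using U VG \<open>m \<le> n\<close> by (meson order_trans)
    qed
    have P5: "\<exists>w. lam*\<tau>/2 \<le> dist z w \<and> dist z w \<le> \<tau>" for z :: 'a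
    proof -
      have "ereal (lam * \<tau>) < mesh_at V z"
        using Lz[of z] unfolding Leb_at_def by simp
      then obtain U where U: "U \<in> V" "z \<in> U" "ereal (lam * \<tau>) < ediam U"
        using lt unfolding mesh_at_def less_Sup_iff by auto
      then obtain x y where xy: "x \<in> U" "y \<in> U" "lam * \<tau> < dist x y" using ediam_gtD lt by force
      have "dist x y \<le> dist z x + dist z y" using dist_triangle[of x y z] dist_commute[of x z] by linarith
      then have "lam*\<tau>/2 \<le> dist z x \<or> lam*\<tau>/2 \<le> dist z y" using xy by linarith
      then show ?thesis using diam U xy by blast
    qed
    show "\<exists>F::nat \<Rightarrow> 'a set set.
     (\<forall>i U. U \<in> F i \<longrightarrow> open U) \<and> (\<forall>i. disjoint (F i)) \<and>
     (\<forall>i U. U \<in> F i \<longrightarrow> (\<forall>x\<in>U. \<forall>y\<in>U. dist x y \<le> \<tau>)) \<and>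
     (\<forall>z. \<exists>i\<le>n. \<exists>U\<in>F i. ball z (lam*\<tau>) \<subseteq> U) \<and>
     (\<forall>z::'a. \<exists>w. lam*\<tau>/2 \<le> dist z w \<and> dist z w \<le> \<tau>)"
      using P1 P2 P3 P4 P5 by (intro exI[of _ G]) auto
  qed
  show ?thesis unfolding GP_def using main lam \<tau>0 by blast
qed



definition shr :: "real \<Rightarrow> 'a::metric_space set \<Rightarrow> 'a set" where
  "shr t U = {x. \<exists>e>t. ball x e \<subseteq> U}"

lemma shr_open: "open (shr t U)"
  unfolding open_contains_ball
proof
  fix x assume "x \<in> shr t U"
  then obtain e where e: "e > t" "ball x e \<subseteq> U" unfolding shr_def by auto
  have "ball x (e - t) \<subseteq> shr t U"
  proof
    fix y assume y: "y \<in> ball x (e - t)"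
    have "ball y (e - dist x y) \<subseteq> ball x e"
    proof
      fix w assume "w \<in> ball y (e - dist x y)"
      then show "w \<in> ball x e" using dist_triangle[of x w y] by simp
    qed
    then show "y \<in> shr t U" unfolding shr_def using y e by (intro CollectI exI[of _ "e - dist x y"]) auto
  qed
  then show "\<exists>\<epsilon>>0. ball x \<epsilon> \<subseteq> shr t U" using e by (intro exI[of _ "e - t"]) auto
qed

lemma shr_sub: "0 \<le> t \<Longrightarrow> shr t U \<subseteq> U"
  unfolding shr_def by force

lemma shr_ball: "ball z a \<subseteq> U \<Longrightarrow> b + t < a \<Longrightarrow> 0 \<le> b \<Longrightarrow> ball z b \<subseteq> shr t U"
proof
  fix y assume a: "ball z a \<subseteq> U" "b + t < a" "0 \<le> b" "y \<in> ball z b"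
  have "ball y (a - b) \<subseteq> ball z a"
  proof
    fix w assume "w \<in> ball y (a - b)"
    then show "w \<in> ball z a" using a(4) dist_triangle[of z w y] by auto
  qed
  then show "y \<in> shr t U" unfolding shr_def using a by (intro CollectI exI[of _ "a - b"]) auto
qed

lemma shr_sep: "0 \<le> t \<Longrightarrow> U \<inter> U' = {} \<Longrightarrow> x \<in> shr t U \<Longrightarrow> y \<in> shr t U' \<Longrightarrow> t < dist x y"
proof -
  assume a: "0 \<le> t" "U \<inter> U' = {}" "x \<in> shr t U" "y \<in> shr t U'"
  then obtain e where e: "e > t" "ball x e \<subseteq> U" unfolding shr_def by auto
  have "y \<in> U'" using shr_sub a by blast
  then have "y \<notin> ball x e" using e a by blast
  then show ?thesis using e by simp
qed

theorem proposition4p4: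
  fixes n :: nat
  assumes "cdim TYPE('a::metric_space) \<le> enat n"
  shows "\<exists>c0 > 0. \<exists>\<delta> > 0. \<exists>r0 > (0::real). \<forall>r. 0 < r \<and> r < r0 \<longrightarrow>
    (\<exists>A :: nat set. \<exists>\<U> :: nat \<Rightarrow> nat \<Rightarrow> 'a set set.
       card A = n + 1 \<and>
       (\<forall>j\<ge>1. open_covering (\<Union>a\<in>A. \<U> j a) \<and> (\<forall>a\<in>A. disjoint (\<U> j a))) \<and>
       (\<forall>j\<ge>1. ereal (\<delta> * r ^ j) \<le> mesh (\<Union>a\<in>A. \<U> j a) \<and>
               mesh (\<Union>a\<in>A. \<U> j a) \<le> ereal (r ^ j) \<and>
               Leb (\<Union>a\<in>A. \<U> j a) \<ge> ereal c0 * mesh (\<Union>a\<in>A. \<U> j a)) \<and>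
       (\<forall>i j. 1 \<le> j \<and> j < i \<longrightarrow> inscribed (\<Union>a\<in>A. \<U> i a) (\<Union>a\<in>A. \<U> j a)) \<and>
       (\<forall>a\<in>A. separated (\<Union>j\<in>{1..}. \<U> j a)))"
proof -
  obtain lam \<tau>0 where lam: "lam > 0" "lam \<le> 1" "\<tau>0 > 0"
    and G: "\<And>\<tau>. 0 < \<tau> \<Longrightarrow> \<tau> < \<tau>0 \<Longrightarrow> \<exists>F::nat \<Rightarrow> 'a set set. GP n lam \<tau> F"
    using good[OF assms] by blast
  have perf: "\<exists>w. lam*\<tau>/2 \<le> dist z w \<and> dist z w \<le> \<tau>" if tt: "0 < \<tau>" "\<tau> < \<tau>0" for \<tau> and z :: 'a
  proof -
    obtain F :: "nat \<Rightarrow> 'a set set" where "GP n lam \<tau> F" using G[OF tt] by blast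
    then show ?thesis unfolding GP_def by blast
  qed
  define c0 where "c0 = lam^2/32"
  have c0: "c0 > 0" unfolding c0_def using lam by simp
  define r0 where "r0 = min \<tau>0 (lam/8)"
  have r0: "r0 > 0" unfolding r0_def using lam by simp
  have main: "\<forall>r. 0 < r \<and> r < r0 \<longrightarrow>
    (\<exists>A :: nat set. \<exists>\<U> :: nat \<Rightarrow> nat \<Rightarrow> 'a set set.
       card A = n + 1 \<and>
       (\<forall>j\<ge>1. open_covering (\<Union>a\<in>A. \<U> j a) \<and> (\<forall>a\<in>A. disjoint (\<U> j a))) \<and>
       (\<forall>j\<ge>1. ereal (c0 * r ^ j) \<le> mesh (\<Union>a\<in>A. \<U> j a) \<and>
               mesh (\<Union>a\<in>A. \<U> j a) \<le> ereal (r ^ j) \<and>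
               Leb (\<Union>a\<in>A. \<U> j a) \<ge> ereal c0 * mesh (\<Union>a\<in>A. \<U> j a)) \<and>
       (\<forall>i j. 1 \<le> j \<and> j < i \<longrightarrow> inscribed (\<Union>a\<in>A. \<U> i a) (\<Union>a\<in>A. \<U> j a)) \<and>
       (\<forall>a\<in>A. separated (\<Union>j\<in>{1..}. \<U> j a)))"
  proof (intro allI impI)
    fix r :: real assume r: "0 < r \<and> r < r0"
    have rp: "0 < r" "r < \<tau>0" "r < lam/8" "r < 1/8" using r lam unfolding r0_def by auto
    have rk_le: "r^k \<le> r" if "k \<ge> 1" for k :: nat
      using power_decreasing[of 1 k r] that rp by simp
    have rk_pos: "0 < r^k" for k :: nat using rp by simp
    have "\<forall>k. \<exists>F::nat \<Rightarrow> 'a set set. 1 \<le> k \<longrightarrow> GP n lam (r^k/2) F"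
    proof
      fix k :: nat
      show "\<exists>F::nat \<Rightarrow> 'a set set. 1 \<le> k \<longrightarrow> GP n lam (r^k/2) F"
      proof (cases "1 \<le> k")
        case True
        then have "0 < r^k/2" "r^k/2 < \<tau>0" using rk_le[OF True] rk_pos[of k] rp by auto
        then show ?thesis using G by blast
      qed simp
    qed
    then obtain Fs :: "nat \<Rightarrow> nat \<Rightarrow> 'a set set" where Fs: "\<And>k. 1 \<le> k \<Longrightarrow> GP n lam (r^k/2) (Fs k)" by metis
    define t where "t k = lam * r^k / 4" for k :: nat
    have t_pos: "0 \<le> t k" for k unfolding t_def using lam rk_pos[of k] by simp
    define S where "S k i = shr (t k) ` Fs k i" for k i
    define N where "N i = {p. 1 \<le> fst p \<and> snd p \<in> S (fst p) i}" for i
    define \<U> where "\<U> j i = (\<lambda>W. hat (N i) (j, W)) ` S j i" for j i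
    define A where "A = {..n}"
    define \<rho> where "\<rho> j = lam * r^j / 8" for j :: nat
    have \<rho>_pos: "0 < \<rho> j" for j unfolding \<rho>_def using lam rk_pos[of j] by simp
    have SD: "dist x y \<le> r^k/2" if hh: "1 \<le> k" "W \<in> S k i" "x \<in> W" "y \<in> W" for k i W x y
    proof -
      obtain U where U: "U \<in> Fs k i" "W = shr (t k) U" using hh unfolding S_def by auto
      then have "x \<in> U" "y \<in> U" using shr_sub[OF t_pos] hh by auto
      then show ?thesis using Fs[OF hh(1)] U unfolding GP_def by blast
    qed
    have F2: "2 * r^(Suc k) < t k" for k
    proof -
      have "2 * r * r^k < (lam/4) * r^k" using rp rk_pos[of k] by (intro mult_strict_right_mono) auto
      then show ?thesis unfolding t_def by (simp add: mult.assoc mult.commute mult.left_commute)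
    qed
    have SS: "2 * r^(Suc k) < dist x y" if hh: "1 \<le> k" "W \<in> S k i" "W' \<in> S k i" "W \<noteq> W'" "x \<in> W" "y \<in> W'"
      for k i W W' x y
    proof -
      obtain U where U: "U \<in> Fs k i" "W = shr (t k) U" using hh unfolding S_def by auto
      obtain U' where U': "U' \<in> Fs k i" "W' = shr (t k) U'" using hh unfolding S_def by auto
      have "U \<noteq> U'" using U U' hh by auto
      then have "U \<inter> U' = {}" using Fs[OF hh(1)] U U' unfolding GP_def disjoint_def pairwise_def disjnt_def by blast
      then have "t k < dist x y" using shr_sep[OF t_pos] U U' hh by blast
      then show ?thesis using F2[of k] by linarith
    qed
    have C: "clus (N i) r" for i
    proof
      show "0 < r" using rp by simp
      show "r \<le> 1/4" using rp by simp
      show "dist x y \<le> r^k/2" if "(k,W) \<in> N i" "x \<in> W" "y \<in> W" for k W x y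
        using SD that unfolding N_def by auto
      show "2 * r^(Suc k) < dist x y" if "(k,W) \<in> N i" "(k,W') \<in> N i" "W \<noteq> W'" "x \<in> W" "y \<in> W'" for k W W' x y
      proof -
        from that have "1 \<le> k" "W \<in> S k i" "W' \<in> S k i" unfolding N_def by auto
        then show ?thesis using SS[of k W i W' x y] that by blast
      qed
    qed
    have Nopen: "open W" if "(k,W) \<in> N i" for k W i
      using that shr_open unfolding N_def S_def by auto
    have cov: "\<exists>a\<in>A. \<exists>W\<in>S j a. ball z (\<rho> j) \<subseteq> W" if hj: "1 \<le> j" for j z
    proof -
      obtain i U where U: "i \<le> n" "U \<in> Fs j i" "ball z (lam * (r^j/2)) \<subseteq> U"
        using Fs[OF hj] unfolding GP_def by blast
      have "ball z (\<rho> j) \<subseteq> shr (t j) U"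
        using U(3) lam rk_pos[of j] by (intro shr_ball) (auto simp: \<rho>_def t_def)
      then show ?thesis using U unfolding A_def S_def by auto
    qed
    have covU: "\<exists>a\<in>A. \<exists>X\<in>\<U> j a. ball z (\<rho> j) \<subseteq> X" if hj: "1 \<le> j" for j z
    proof -
      obtain a W where aW: "a \<in> A" "W \<in> S j a" "ball z (\<rho> j) \<subseteq> W" using cov[OF hj] by blast
      have "W \<subseteq> hat (N a) (j,W)" using clus.hat_sub[OF C] by blast
      then show ?thesis using aW unfolding \<U>_def by blast
    qed
    have memU: "\<exists>W. W \<in> S j a \<and> X = hat (N a) (j,W) \<and> (j,W) \<in> N a" if "X \<in> \<U> j a" "1 \<le> j" for X j a
      using that unfolding \<U>_def N_def by auto
    have P1: "open_covering (\<Union>a\<in>A. \<U> j a) \<and> (\<forall>a\<in>A. disjoint (\<U> j a))" if hj: "1 \<le> j" for j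
    proof (intro conjI ballI)
      show "open_covering (\<Union>a\<in>A. \<U> j a)"
        unfolding open_covering_def
      proof (intro conjI ballI)
        fix X assume "X \<in> (\<Union>a\<in>A. \<U> j a)"
        then obtain a W where "X = hat (N a) (j,W)" "(j,W) \<in> N a" using memU hj by blast
        then show "open X" using clus.hat_open[OF C] Nopen by metis
      next
        show "\<Union>(\<Union>a\<in>A. \<U> j a) = UNIV"
        proof (rule set_eqI, rule iffI)
          fix z :: 'a
          obtain a and X :: "'a set" where "a \<in> A" "X \<in> \<U> j a" "ball z (\<rho> j) \<subseteq> X" using covU[OF hj] by blast
          then show "z \<in> \<Union>(\<Union>a\<in>A. \<U> j a)" using \<rho>_pos[of j] centre_in_ball by blast
        qed simp
      qed
    next
      fix a assume "a \<in> A"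
      show "disjoint (\<U> j a)"
        unfolding disjoint_def pairwise_def disjnt_def
      proof (intro ballI impI)
        fix X Y assume XY: "X \<in> \<U> j a" "Y \<in> \<U> j a" "X \<noteq> Y"
        then obtain W W' where "X = hat (N a) (j,W)" "(j,W) \<in> N a" "Y = hat (N a) (j,W')" "(j,W') \<in> N a"
          using memU hj by metis
        then show "X \<inter> Y = {}" using clus.hat_disj[OF C] XY by metis
      qed
    qed
    have P2: "ereal (c0 * r ^ j) \<le> mesh (\<Union>a\<in>A. \<U> j a) \<and>
               mesh (\<Union>a\<in>A. \<U> j a) \<le> ereal (r ^ j) \<and>
               Leb (\<Union>a\<in>A. \<U> j a) \<ge> ereal c0 * mesh (\<Union>a\<in>A. \<U> j a)" if hj: "1 \<le> j" for j
    proof -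
      let ?V = "\<Union>a\<in>A. \<U> j a"
      have mup: "mesh ?V \<le> ereal (r^j)"
      proof (rule mesh_le)
        fix X assume "X \<in> ?V"
        then obtain a W where "X = hat (N a) (j,W)" "(j,W) \<in> N a" using memU hj by blast
        then show "ediam X \<le> ereal (r^j)" using clus.hat_diam[OF C] by (intro ediam_le) (auto intro: less_imp_le[OF rk_pos])
      qed (rule less_imp_le[OF rk_pos])
      have pt: "\<exists>X\<in>?V. ball z (\<rho> j) \<subseteq> X \<and> ereal (c0 * r^j) \<le> ediam X" for z
      proof -
        obtain a X where X: "a \<in> A" "X \<in> \<U> j a" "ball z (\<rho> j) \<subseteq> X" using covU[OF hj] by blast
        have "lam * r^j \<le> 1 * r^j" using lam rk_pos[of j] by (intro mult_right_mono) auto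
        moreover have "\<rho> j / 2 = lam * r^j / 16" unfolding \<rho>_def by simp
        ultimately have "0 < \<rho> j / 2" "\<rho> j / 2 < \<tau>0" using \<rho>_pos[of j] rk_le[OF hj] rp by linarith+
        then obtain w where w: "lam * (\<rho> j/2) / 2 \<le> dist z w" "dist z w \<le> \<rho> j/2" using perf by blast
        have "w \<in> X" using w X(3) \<rho>_pos[of j] by auto
        moreover have "c0 * r^j = lam * (\<rho> j/2) / 2" unfolding c0_def \<rho>_def by (simp add: power2_eq_square)
        moreover have "z \<in> X" using X(3) \<rho>_pos[of j] centre_in_ball by blast
        ultimately have e1: "ereal (dist z w) \<le> ediam X" using ediam_ge by blast
        have "c0 * r^j \<le> dist z w" using w \<open>c0 * r^j = lam * (\<rho> j/2) / 2\<close> by linarith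
        then have "ereal (c0 * r^j) \<le> ereal (dist z w)" by simp
        then have "ereal (c0 * r^j) \<le> ediam X" using e1 by (rule order_trans)
        then show ?thesis using X by blast
      qed
      have c0\<rho>: "c0 * r^j \<le> \<rho> j" unfolding c0_def \<rho>_def using lam rk_pos[of j]
        by (simp add: power2_eq_square mult_right_mono)
      have mlow: "ereal (c0 * r^j) \<le> mesh ?V"
      proof -
        obtain X where "X \<in> ?V" "ereal (c0 * r^j) \<le> ediam X" using pt[of undefined] by blast
        then show ?thesis using mesh_ge[of X ?V] by (rule_tac order_trans) auto
      qed
      have Lz: "ereal (c0 * r^j) \<le> Leb_at ?V z" for z
      proof -
        obtain X where X: "X \<in> ?V" "ball z (\<rho> j) \<subseteq> X" "ereal (c0 * r^j) \<le> ediam X" using pt by blast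
        have "ereal (\<rho> j) \<le> dist_compl z X"
        proof (cases "X = UNIV")
          case False
          then have "\<rho> j \<le> infdist z (- X)" using X(2) by (intro infdist_geI) (auto simp: subset_eq)
          then show ?thesis using False unfolding dist_compl_def by simp
        qed (simp add: dist_compl_def)
        also have "\<dots> \<le> Sup (insert 0 ((\<lambda>U. dist_compl z U) ` ?V))" using X(1) by (intro Sup_upper) auto
        finally have 1: "ereal (c0 * r^j) \<le> Sup (insert 0 ((\<lambda>U. dist_compl z U) ` ?V))"
          using c0\<rho> by (rule_tac order_trans[of _ "ereal (\<rho> j)"]) auto
        have "z \<in> X" using X(2) \<rho>_pos[of j] centre_in_ball by blast
        then have 2: "ereal (c0 * r^j) \<le> mesh_at ?V z" using X(1,3) mesh_at_ge[of X ?V z]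
          by (rule_tac order_trans) auto
        show ?thesis unfolding Leb_at_def using 1 2 by simp
      qed
      have "ereal (c0 * r^j) \<le> Leb ?V" unfolding Leb_def using Lz by (intro INF_greatest)
      moreover have "ereal c0 * mesh ?V \<le> ereal c0 * ereal (r^j)"
        using mup c0 by (intro ereal_mult_left_mono) auto
      ultimately show ?thesis using mlow mup by simp
    qed
    have P3: "inscribed (\<Union>a\<in>A. \<U> i a) (\<Union>a\<in>A. \<U> j a)" if hj: "1 \<le> j" "j < i" for i j
      unfolding inscribed_def
    proof
      fix Y assume "Y \<in> (\<Union>a\<in>A. \<U> i a)"
      then obtain a W where aW: "a \<in> A" "Y = hat (N a) (i,W)" "(i,W) \<in> N a" using memU hj by force
      show "\<exists>X\<in>\<Union>a\<in>A. \<U> j a. Y \<subseteq> X"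
      proof (cases "W = {}")
        case True
        then have "Y = {}" using aW clus.hat_empty[OF C] by simp
        then show ?thesis using covU[OF hj(1), of undefined] by blast
      next
        case False
        then obtain w where "w \<in> W" by blast
        have ri: "r^i \<le> r^(Suc j)" using power_decreasing[of "Suc j" i r] hj rp by simp
        have "r^(Suc j) * (1/2 + r) < lam * r^j / 8"
        proof -
          have "r * (1/2 + r) \<le> r * 1" using rp by (intro mult_left_mono) auto
          then have "r * (1/2 + r) < lam/8" using rp by linarith
          then have "r^j * (r * (1/2 + r)) < r^j * (lam/8)" using rk_pos[of j] by (rule mult_strict_left_mono)
          then show ?thesis by (simp add: algebra_simps)
        qed
        moreover have "r^i/2 + r^(Suc i) \<le> r^(Suc j) * (1/2 + r)"
        proof -
          have "r * r^i \<le> r * r^(Suc j)" using ri rp by (intro mult_left_mono) auto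
          then show ?thesis using ri by (simp add: algebra_simps)
        qed
        ultimately have small: "r^i/2 + r^(Suc i) < \<rho> j" unfolding \<rho>_def by linarith
        have "Y \<subseteq> ball w (\<rho> j)"
        proof
          fix y assume "y \<in> Y"
          then have "dist w y \<le> r^i/2 + r^(Suc i)" using clus.hat_ball[OF C aW(3) \<open>w \<in> W\<close>] aW by blast
          then show "y \<in> ball w (\<rho> j)" using small by simp
        qed
        then show ?thesis using covU[OF hj(1), of w] by blast
      qed
    qed
    have P4: "separated (\<Union>j\<in>{1..}. \<U> j a)" if "a \<in> A" for a
      unfolding separated_def
    proof (intro ballI impI)
      fix X Y assume XY: "X \<in> (\<Union>j\<in>{1..}. \<U> j a)" "Y \<in> (\<Union>j\<in>{1..}. \<U> j a)" "X \<noteq> Y"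
      then obtain j i U W where jU: "1 \<le> j" "X = hat (N a) (j,U)" "(j,U) \<in> N a"
        and iW: "1 \<le> i" "Y = hat (N a) (i,W)" "(i,W) \<in> N a"
        using memU by (metis UN_E atLeast_iff)
      consider "j = i" | "j < i" | "i < j" by linarith
      then show "X \<inter> Y = {} \<or> X \<subseteq> Y \<or> Y \<subseteq> X"
      proof cases
        case 1
        then have "U \<noteq> W" using XY jU iW by auto
        then show ?thesis using clus.hat_disj[OF C] jU iW 1 by metis
      next
        case 2
        then show ?thesis using clus.hat_nest[OF C jU(3) iW(3)] jU iW by blast
      next
        case 3
        then show ?thesis using clus.hat_nest[OF C iW(3) jU(3)] jU iW by blast
      qed
    qed
    show "\<exists>A :: nat set. \<exists>\<U> :: nat \<Rightarrow> nat \<Rightarrow> 'a set set.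
       card A = n + 1 \<and>
       (\<forall>j\<ge>1. open_covering (\<Union>a\<in>A. \<U> j a) \<and> (\<forall>a\<in>A. disjoint (\<U> j a))) \<and>
       (\<forall>j\<ge>1. ereal (c0 * r ^ j) \<le> mesh (\<Union>a\<in>A. \<U> j a) \<and>
               mesh (\<Union>a\<in>A. \<U> j a) \<le> ereal (r ^ j) \<and>
               Leb (\<Union>a\<in>A. \<U> j a) \<ge> ereal c0 * mesh (\<Union>a\<in>A. \<U> j a)) \<and>
       (\<forall>i j. 1 \<le> j \<and> j < i \<longrightarrow> inscribed (\<Union>a\<in>A. \<U> i a) (\<Union>a\<in>A. \<U> j a)) \<and>
       (\<forall>a\<in>A. separated (\<Union>j\<in>{1..}. \<U> j a))"
      apply (rule exI[of _ A], rule exI[of _ \<U>])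
      using P1 P2 P3 P4 unfolding A_def by auto
  qed
  show ?thesis
    apply (rule exI[of _ c0], rule conjI[OF c0])
    apply (rule exI[of _ c0], rule conjI[OF c0])
    apply (rule exI[of _ r0], rule conjI[OF r0])
    using main by blast
qed


end
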